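(* Let $G=(m,n,\boldsymbol{c},\boldsymbol{d},r_{\max},r_{\min})$ be an interbank lending game and let $\boldsymbol{s}^*$ be its pure Nash equilibrium. Then the interest rates offered by the borrowers at $\boldsymbol{s}^*$ are identical: $r_j(\boldsymbol{s}^* )=r_{j'}(\boldsymbol{s}^* )$ for all $j,j'\in B$.
   Context: An interbank lending game $G=(m,n,\boldsymbol{c},\boldsymbol{d},r_{\max},r_{\min})$ consists of positive integers $m,n$, budgets $\boldsymbol{c}\in\mathbb{R}_{>0}^m$, demands $\boldsymbol{d}\in\mathbb{R}_{>0}^n$ and reals $0<r_{\min}<r_{\max}$. The players are the lenders $L=\{1,\dots,m\}$; $B=\{1,\dots,n\}$ is the set of borrowers. Lender $i$'s strategy set is $S_i=\{s_i\in\mathbb{R}_{\ge0}^n:\sum_{j\in B}s_{ij}\le c_i\}$, the strategy space is $\boldsymbol{S}=\prod_{i\in L}S_i$ with elements $\boldsymbol{s}=(s_{ij})$. The interest rate of borrower $j$ is $r_j(\boldsymbol{s})=(r_{\min}-r_{\max})\frac{\sum_{i\in L}s_{ij}}{d_j}+r_{\max}$ and lender $i$'s utility is $u_i(\boldsymbol{s})=\sum_{j\in B}(r_j(\boldsymbol{s})-r_{\min})s_{ij}$. A pure Nash equilibrium is $\boldsymbol{s}^*\in\boldsymbol{S}$ with $u_i(\boldsymbol{s}^* )\ge u_i(s_i,\boldsymbol{s}^*_{-i})$ for all $i\in L$, $s_i\in S_i$ (such a game has exactly one pure Nash equilibrium). *)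

theory Defs
  imports Complex_Main
begin

(* Lenders are {1..m}, borrowers are {1..n}. A strategy profile is s :: nat => nat => real,
   s i j = amount lender i lends to borrower j. Entries outside the index ranges are irrelevant. *)

definition is_game :: "nat \<Rightarrow> nat \<Rightarrow> (nat \<Rightarrow> real) \<Rightarrow> (nat \<Rightarrow> real) \<Rightarrow> real \<Rightarrow> real \<Rightarrow> bool" where
  "is_game m n c d rmax rmin \<longleftrightarrow> m > 0 \<and> n > 0 \<and> (\<forall>i\<in>{1..m}. c i > 0) \<and>
     (\<forall>j\<in>{1..n}. d j > 0) \<and> 0 < rmin \<and> rmin < rmax"

definition strategy_set :: "nat \<Rightarrow> (nat \<Rightarrow> real) \<Rightarrow> nat \<Rightarrow> (nat \<Rightarrow> real) set" where
  "strategy_set n c i = {si. (\<forall>j\<in>{1..n}. si j \<ge> 0) \<and> (\<Sum>j\<in>{1..n}. si j) \<le> c i}"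

definition profile_space :: "nat \<Rightarrow> nat \<Rightarrow> (nat \<Rightarrow> real) \<Rightarrow> (nat \<Rightarrow> nat \<Rightarrow> real) set" where
  "profile_space m n c = {s. \<forall>i\<in>{1..m}. s i \<in> strategy_set n c i}"

definition rate :: "nat \<Rightarrow> (nat \<Rightarrow> real) \<Rightarrow> real \<Rightarrow> real \<Rightarrow> (nat \<Rightarrow> nat \<Rightarrow> real) \<Rightarrow> nat \<Rightarrow> real" where
  "rate m d rmax rmin s j = (rmin - rmax) * (\<Sum>i\<in>{1..m}. s i j) / d j + rmax"

definition utility :: "nat \<Rightarrow> nat \<Rightarrow> (nat \<Rightarrow> real) \<Rightarrow> real \<Rightarrow> real \<Rightarrow> (nat \<Rightarrow> nat \<Rightarrow> real) \<Rightarrow> nat \<Rightarrow> real" where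
  "utility m n d rmax rmin s i = (\<Sum>j\<in>{1..n}. (rate m d rmax rmin s j - rmin) * s i j)"

definition pure_NE :: "nat \<Rightarrow> nat \<Rightarrow> (nat \<Rightarrow> real) \<Rightarrow> (nat \<Rightarrow> real) \<Rightarrow> real \<Rightarrow> real \<Rightarrow> (nat \<Rightarrow> nat \<Rightarrow> real) \<Rightarrow> bool" where
  "pure_NE m n c d rmax rmin s \<longleftrightarrow> s \<in> profile_space m n c \<and>
     (\<forall>i\<in>{1..m}. \<forall>si\<in>strategy_set n c i.
        utility m n d rmax rmin s i \<ge> utility m n d rmax rmin (s(i := si)) i)"

end

theory Submission
  imports Defs
begin

lemma sum_upd_col:
  fixes s :: "nat \<Rightarrow> nat \<Rightarrow> real"
  assumes "k \<in> {1..m}"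
  shows "(\<Sum>i\<in>{1..m}. (s(k:=si)) i l) = (\<Sum>i\<in>{1..m}. s i l) + (si l - s k l)"
proof -
  have "(\<Sum>i\<in>{1..m}. (s(k:=si)) i l) = (\<Sum>i\<in>{1..m}. s i l + (if i = k then si l - s k l else 0))"
    by (rule sum.cong) auto
  also have "\<dots> = (\<Sum>i\<in>{1..m}. s i l) + (si l - s k l)"
    using assms by (simp add: sum.distrib)
  finally show ?thesis .
qed

lemma deviation:
  assumes G: "is_game m n c d rmax rmin"
    and NE: "pure_NE m n c d rmax rmin s"
    and k: "k \<in> {1..m}" and j: "j \<in> {1..n}" and j': "j' \<in> {1..n}" and jj: "j \<noteq> j'"
    and pos: "s k j' > 0"
  shows "rate m d rmax rmin s j - rate m d rmax rmin s j'
           \<le> (rmax - rmin) * (s k j / d j - s k j' / d j')"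
proof (rule ccontr)
  define a where "a = rmax - rmin"
  define r where "r = rate m d rmax rmin s"
  define K where "K = r j - r j' - a * (s k j / d j) + a * (s k j' / d j')"
  assume "\<not> ?thesis"
  hence Kpos: "K > 0" unfolding K_def a_def r_def by (simp add: algebra_simps)
  have a: "a > 0" using G unfolding is_game_def a_def by auto
  have dj: "d j > 0" and dj': "d j' > 0" using G j j' unfolding is_game_def by auto
  define C where "C = 1 / d j + 1 / d j'"
  have C: "C > 0" using dj dj' unfolding C_def by (simp add: add_pos_pos)
  define e where "e = min (s k j') (K / (2 * a * C))"
  have e: "e > 0" using pos Kpos a C unfolding e_def by auto
  have ey: "e \<le> s k j'" unfolding e_def by auto
  have eK: "a * e * C \<le> K / 2"
  proof -
    have "e \<le> K / (2 * a * C)" unfolding e_def by auto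
    hence "a * C * e \<le> a * C * (K / (2 * a * C))" using a C by (intro mult_left_mono) auto
    also have "\<dots> = K / 2" using a C by (simp add: field_simps)
    finally show ?thesis by (simp add: algebra_simps)
  qed
  define \<delta> where "\<delta> l = (if l = j then e else 0) - (if l = j' then e else (0::real))" for l
  define si where "si l = s k l + \<delta> l" for l
  have sk: "s k \<in> strategy_set n c k" using NE k unfolding pure_NE_def profile_space_def by auto
  have sisum: "(\<Sum>l\<in>{1..n}. si l) = (\<Sum>l\<in>{1..n}. s k l)"
    unfolding si_def \<delta>_def using j j' by (simp add: sum.distrib sum_subtractf)
  have si_in: "si \<in> strategy_set n c k"
  proof -
    have "\<forall>l\<in>{1..n}. si l \<ge> 0"
    proof
      fix l assume "l \<in> {1..n}"
      hence "s k l \<ge> 0" using sk unfolding strategy_set_def by auto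
      thus "si l \<ge> 0" unfolding si_def \<delta>_def using ey e jj by auto
    qed
    thus ?thesis using sk sisum unfolding strategy_set_def by auto
  qed
  have rnew: "rate m d rmax rmin (s(k:=si)) l = r l - a * \<delta> l / d l" for l
  proof -
    have h: "(\<Sum>i\<in>{1..m}. (s(k:=si)) i l) = (\<Sum>i\<in>{1..m}. s i l) + \<delta> l"
      using sum_upd_col[OF k, of s si l] by (simp add: si_def)
    show ?thesis
    proof (cases "d l = 0")
      case True thus ?thesis unfolding rate_def r_def by simp
    next
      case False thus ?thesis unfolding rate_def r_def a_def h by (simp add: field_simps)
    qed
  qed
  define g where "g l = (r l - rmin) * \<delta> l - a * \<delta> l * (s k l + \<delta> l) / d l" for l
  have termeq: "(rate m d rmax rmin (s(k:=si)) l - rmin) * si l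
      - (rate m d rmax rmin s l - rmin) * s k l = g l" for l
    unfolding rnew g_def r_def si_def by (simp add: algebra_simps)
  have gsplit: "g l = (if l = j then g j else 0) + (if l = j' then g j' else 0)" for l
    using jj unfolding g_def \<delta>_def by auto
  have "utility m n d rmax rmin (s(k:=si)) k - utility m n d rmax rmin s k
      = (\<Sum>l\<in>{1..n}. g l)"
    unfolding utility_def sum_subtractf[symmetric] by (rule sum.cong) (simp_all add: termeq)
  also have "\<dots> = g j + g j'"
    using j j' by (subst gsplit) (simp add: sum.distrib)
  also have "\<dots> = e * K - a * e * e * C"
    using jj dj dj' unfolding g_def \<delta>_def K_def C_def by (simp add: field_simps)
  also have "\<dots> \<ge> e * K - e * (K / 2)"
    using eK e by (smt (verit) mult_left_mono mult.commute mult.assoc)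
  finally have fin: "e * K - e * (K / 2) \<le> utility m n d rmax rmin (s(k:=si)) k - utility m n d rmax rmin s k" .
  have "e * K - e * (K / 2) = e * K / 2" by simp
  moreover have "e * K > 0" using e Kpos by simp
  ultimately have "utility m n d rmax rmin (s(k:=si)) k > utility m n d rmax rmin s k"
    using fin by linarith
  moreover have "utility m n d rmax rmin (s(k:=si)) k \<le> utility m n d rmax rmin s k"
    using NE k si_in unfolding pure_NE_def by auto
  ultimately show False by simp
qed

lemma not_gt:
  assumes G: "is_game m n c d rmax rmin"
    and NE: "pure_NE m n c d rmax rmin s"
    and j: "j \<in> {1..n}" and j': "j' \<in> {1..n}"
  shows "\<not> rate m d rmax rmin s j > rate m d rmax rmin s j'"
proof
  assume gt: "rate m d rmax rmin s j > rate m d rmax rmin s j'"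
  hence jj: "j \<noteq> j'" by auto
  have a: "rmax - rmin > 0" using G unfolding is_game_def by auto
  have dj: "d j > 0" and dj': "d j' > 0" using G j j' unfolding is_game_def by auto
  have nn: "s i l \<ge> 0" if "i \<in> {1..m}" "l \<in> {1..n}" for i l
    using NE that unfolding pure_NE_def profile_space_def strategy_set_def by auto
  define X where "X l = (\<Sum>i\<in>{1..m}. s i l)" for l
  have "(rmin - rmax) * (X j / d j) > (rmin - rmax) * (X j' / d j')"
    using gt unfolding rate_def X_def by simp
  hence lt: "X j / d j < X j' / d j'" using a
    by (smt (verit) mult_le_cancel_left)
  have ex: "\<exists>k\<in>{1..m}. s k j' > 0"
  proof (rule ccontr)
    assume "\<not> ?thesis"
    hence "\<forall>k\<in>{1..m}. s k j' = 0" using nn j' by force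
    hence "X j' = 0" unfolding X_def by simp
    moreover have "X j \<ge> 0" unfolding X_def using nn j by (auto intro: sum_nonneg)
    ultimately have "X j / d j < 0" "X j / d j \<ge> 0" using lt dj by simp_all
    thus False by linarith
  qed
  have each: "s k j' / d j' < s k j / d j" if k: "k \<in> {1..m}" and p: "s k j' > 0" for k
  proof -
    have "rate m d rmax rmin s j - rate m d rmax rmin s j'
           \<le> (rmax - rmin) * (s k j / d j - s k j' / d j')"
      by (rule deviation[OF G NE k j j' jj p])
    hence "0 < (rmax - rmin) * (s k j / d j - s k j' / d j')" using gt by linarith
    thus ?thesis using a by (simp add: zero_less_mult_iff)
  qed
  have le: "s k j' / d j' \<le> s k j / d j" if k: "k \<in> {1..m}" for k
  proof (cases "s k j' > 0")
    case True thus ?thesis using each k by force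
  next
    case False
    hence "s k j' = 0" using nn k j' by force
    thus ?thesis using nn[OF k j] dj by simp
  qed
  have "(\<Sum>k\<in>{1..m}. s k j' / d j') < (\<Sum>k\<in>{1..m}. s k j / d j)"
  proof (rule sum_strict_mono_ex1)
    show "\<forall>x\<in>{1..m}. s x j' / d j' \<le> s x j / d j" using le by blast
    show "\<exists>a\<in>{1..m}. s a j' / d j' < s a j / d j" using ex each by blast
  qed simp
  hence "X j' / d j' < X j / d j" unfolding X_def by (simp add: sum_divide_distrib)
  thus False using lt by simp
qed

theorem theorem3p5:
  fixes m n :: nat and c d :: "nat \<Rightarrow> real" and rmax rmin :: real
    and s :: "nat \<Rightarrow> nat \<Rightarrow> real"
  assumes "is_game m n c d rmax rmin"
    and "pure_NE m n c d rmax rmin s"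
    and "j \<in> {1..n}" and "j' \<in> {1..n}"
  shows "rate m d rmax rmin s j = rate m d rmax rmin s j'"
  using not_gt[OF assms(1,2,3,4)] not_gt[OF assms(1,2,4,3)] by linarith

end
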